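(* Let $X$ be a connected non-bipartite graph with $n$ vertices and $m>n$ edges, and let $\{a,b\}\ne\{\alpha,\beta\}$ be edges of $X$. If $\mathbf f_{ab}$ and $\mathbf f_{\alpha\beta}$ are strongly cospectral with respect to the adjacency matrix of the line graph $\mathcal L(X)$, then the graph obtained from $X$ by deleting the edges $\{a,b\}$ and $\{\alpha,\beta\}$ is either disconnected or bipartite.
   Context: The line graph $\mathcal L(X)$ has vertex set $E(X)$ with edges adjacent iff they share an endpoint; $\mathbf f_{ab}$ is the vertex state of the vertex corresponding to $\{a,b\}$. For $M=\sum_\theta\theta F_\theta$ (orthogonal spectral projections), vectors $\mathbf x,\mathbf y$ are strongly cospectral if $F_\theta\mathbf x=\pm F_\theta\mathbf y$ for every eigenvalue $\theta$. *)

theory Defs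
  imports Complex_Main
begin

definition simple_graph :: "'a set \<Rightarrow> 'a set set \<Rightarrow> bool" where
  "simple_graph V E \<longleftrightarrow> finite V \<and> (\<forall>e\<in>E. e \<subseteq> V \<and> card e = 2)"

definition adj :: "'a set set \<Rightarrow> 'a \<Rightarrow> 'a \<Rightarrow> bool" where
  "adj E u v \<longleftrightarrow> {u, v} \<in> E"

definition connected_graph :: "'a set \<Rightarrow> 'a set set \<Rightarrow> bool" where
  "connected_graph V E \<longleftrightarrow> V \<noteq> {} \<and> (\<forall>u\<in>V. \<forall>v\<in>V. (adj E)\<^sup>*\<^sup>* u v)"

definition bipartite_graph :: "'a set \<Rightarrow> 'a set set \<Rightarrow> bool" where
  "bipartite_graph V E \<longleftrightarrow> (\<exists>c :: 'a \<Rightarrow> bool. \<forall>u\<in>V. \<forall>v\<in>V. {u, v} \<in> E \<longrightarrow> c u \<noteq> c v)"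

definition line_adj :: "'a set set \<Rightarrow> 'a set \<Rightarrow> 'a set \<Rightarrow> real" where
  "line_adj E e f = (if e \<in> E \<and> f \<in> E \<and> e \<noteq> f \<and> e \<inter> f \<noteq> {} then 1 else 0)"

text \<open>Real vectors indexed by a finite set I are functions vanishing outside I.\<close>
definition eigenspace_on :: "'i set \<Rightarrow> ('i \<Rightarrow> 'i \<Rightarrow> real) \<Rightarrow> real \<Rightarrow> ('i \<Rightarrow> real) set" where
  "eigenspace_on I M \<theta> = {x. (\<forall>i. i \<notin> I \<longrightarrow> x i = 0) \<and>
       (\<forall>i\<in>I. (\<Sum>j\<in>I. M i j * x j) = \<theta> * x i)}"

definition is_eigenvalue_on :: "'i set \<Rightarrow> ('i \<Rightarrow> 'i \<Rightarrow> real) \<Rightarrow> real \<Rightarrow> bool" where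
  "is_eigenvalue_on I M \<theta> \<longleftrightarrow> (\<exists>x\<in>eigenspace_on I M \<theta>. x \<noteq> (\<lambda>_. 0))"

definition orth_proj :: "'i set \<Rightarrow> ('i \<Rightarrow> real) set \<Rightarrow> ('i \<Rightarrow> real) \<Rightarrow> ('i \<Rightarrow> real)" where
  "orth_proj I W y = (THE p. p \<in> W \<and> (\<forall>w\<in>W. (\<Sum>i\<in>I. (y i - p i) * w i) = 0))"

definition spectral_proj :: "'i set \<Rightarrow> ('i \<Rightarrow> 'i \<Rightarrow> real) \<Rightarrow> real \<Rightarrow> ('i \<Rightarrow> real) \<Rightarrow> ('i \<Rightarrow> real)" where
  "spectral_proj I M \<theta> = orth_proj I (eigenspace_on I M \<theta>)"

definition strongly_cospectral :: "'i set \<Rightarrow> ('i \<Rightarrow> 'i \<Rightarrow> real) \<Rightarrow> ('i \<Rightarrow> real) \<Rightarrow> ('i \<Rightarrow> real) \<Rightarrow> bool" where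
  "strongly_cospectral I M x y \<longleftrightarrow>
     (\<forall>\<theta>. is_eigenvalue_on I M \<theta> \<longrightarrow>
        spectral_proj I M \<theta> x = spectral_proj I M \<theta> y \<or>
        spectral_proj I M \<theta> x = (\<lambda>i. - spectral_proj I M \<theta> y i))"

definition vertex_state :: "'i \<Rightarrow> ('i \<Rightarrow> real)" where
  "vertex_state e = (\<lambda>f. if f = e then 1 else 0)"

end

theory Submission
  imports Defs
begin


definition subsp :: "'i set \<Rightarrow> ('i \<Rightarrow> real) set \<Rightarrow> bool" where
"subsp I W \<longleftrightarrow> (\<forall>x\<in>W. \<forall>i. i\<notin>I \<longrightarrow> x i = 0) \<and> (\<lambda>_. 0) \<in> W \<and>
   (\<forall>x\<in>W. \<forall>y\<in>W. (\<lambda>i. x i + y i) \<in> W) \<and> (\<forall>x\<in>W. \<forall>c. (\<lambda>i. c * x i) \<in> W)"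

lemma subsp_diff: assumes "subsp I W" "x\<in>W" "y\<in>W" shows "(\<lambda>i. x i - c * y i) \<in> W"
proof -
  have yc: "(\<lambda>i. (-c) * y i) \<in> W" using assms unfolding subsp_def by blast
  have h: "\<forall>x\<in>W. \<forall>y\<in>W. (\<lambda>i. x i + y i) \<in> W" using assms unfolding subsp_def by blast
  show ?thesis using bspec[OF bspec[OF h assms(2)] yc] by simp
qed

lemma subsp_add: assumes "subsp I W" "x\<in>W" "y\<in>W" shows "(\<lambda>i. x i + c * y i) \<in> W"
proof -
  have yc: "(\<lambda>i. c * y i) \<in> W" using assms unfolding subsp_def by blast
  have h: "\<forall>x\<in>W. \<forall>y\<in>W. (\<lambda>i. x i + y i) \<in> W" using assms unfolding subsp_def by blast
  show ?thesis using bspec[OF bspec[OF h assms(2)] yc] by simp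
qed

definition ip :: "'i set \<Rightarrow> ('i\<Rightarrow>real) \<Rightarrow> ('i\<Rightarrow>real) \<Rightarrow> real" where
  "ip I x y = (\<Sum>i\<in>I. x i * y i)"

lemma ip_insert0: "finite J \<Longrightarrow> i\<notin>J \<Longrightarrow> w i = 0 \<Longrightarrow> ip (insert i J) x w = ip J x w"
  by (simp add: ip_def)
lemma ip_lin_left: "ip I (\<lambda>k. x k - c * z k) w = ip I x w - c * ip I z w"
  by (simp add: ip_def algebra_simps sum_subtractf sum_distrib_left)
lemma ip_lin_right: "ip I x (\<lambda>k. a k + c * b k) = ip I x a + c * ip I x b"
  by (simp add: ip_def algebra_simps sum.distrib sum_distrib_left)

lemma proj_exists:
  assumes "finite I" "subsp I W"
  shows "\<exists>p\<in>W. \<forall>w\<in>W. ip I (\<lambda>k. y k - p k) w = 0"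
  using assms
proof (induction I arbitrary: W y rule: finite_induct)
  case empty
  then show ?case unfolding subsp_def ip_def by auto
next
  case (insert i J)
  define W0 where "W0 = {w\<in>W. w i = 0}"
  have sW0: "subsp J W0" using insert.prems unfolding subsp_def W0_def by auto
  have red: "\<And>w x. w \<in> W0 \<Longrightarrow> ip (insert i J) x w = ip J x w"
    unfolding W0_def using insert.hyps by (simp add: ip_def)
  obtain p0 where p0: "p0 \<in> W0" "\<forall>w\<in>W0. ip J (\<lambda>k. y k - p0 k) w = 0"
    using insert.IH[OF sW0] by blast
  show ?case
  proof (cases "\<forall>w\<in>W. w i = 0")
    case True
    then have "W0 = W" unfolding W0_def by auto
    then show ?thesis using p0 red by auto
  next
    case False
    then obtain u where u: "u \<in> W" "u i \<noteq> 0" by auto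
    obtain q where q: "q \<in> W0" "\<forall>w\<in>W0. ip J (\<lambda>k. u k - q k) w = 0"
      using insert.IH[OF sW0] by blast
    define u' where "u' = (\<lambda>k. u k - q k)"
    have u'W: "u' \<in> W" using subsp_diff[OF insert.prems u(1), of q 1] q(1)
      unfolding u'_def W0_def by simp
    have u'i: "u' i \<noteq> 0" using u q(1) unfolding u'_def W0_def by simp
    define nn where "nn = ip (insert i J) u' u'"
    have "nn = u' i * u' i + ip J u' u'" unfolding nn_def ip_def using insert.hyps by simp
    moreover have "ip J u' u' \<ge> 0" unfolding ip_def by (auto intro: sum_nonneg)
    moreover have "u' i * u' i > 0" using u'i by (meson not_real_square_gt_zero)
    ultimately have nn: "nn > 0" by linarith
    have orth0: "\<forall>w\<in>W0. ip (insert i J) u' w = 0" using q(2) red unfolding u'_def by auto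
    define t where "t = ip (insert i J) (\<lambda>k. y k - p0 k) u' / nn"
    define p where "p = (\<lambda>k. p0 k + t * u' k)"
    have p0W: "p0 \<in> W" using p0 W0_def by auto
    have pW: "p \<in> W" unfolding p_def using subsp_add[OF insert.prems p0W u'W] .
    have yp: "(\<lambda>k. y k - p k) = (\<lambda>k. (y k - p0 k) - t * u' k)"
      by (simp add: p_def algebra_simps)
    have A: "ip (insert i J) (\<lambda>k. y k - p k) u' = 0"
      unfolding yp ip_lin_left using nn unfolding t_def nn_def by simp
    have "\<forall>w\<in>W. ip (insert i J) (\<lambda>k. y k - p k) w = 0"
    proof
      fix w assume w: "w \<in> W"
      define c where "c = w i / u' i"
      define w0 where "w0 = (\<lambda>k. w k - c * u' k)"
      have "w0 \<in> W" unfolding w0_def using subsp_diff[OF insert.prems w u'W] .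
      moreover have "w0 i = 0" unfolding w0_def c_def using u'i by simp
      ultimately have w0: "w0 \<in> W0" unfolding W0_def by simp
      have ww: "w = (\<lambda>k. w0 k + c * u' k)" unfolding w0_def by simp
      have B1: "ip (insert i J) (\<lambda>k. y k - p0 k) w0 = 0"
        using p0(2) w0 by (simp only: red[OF w0])
      have B2: "ip (insert i J) u' w0 = 0" using orth0 w0 by blast
      have B: "ip (insert i J) (\<lambda>k. y k - p k) w0 = 0"
        unfolding yp ip_lin_left by (simp add: B1 B2)
      show "ip (insert i J) (\<lambda>k. y k - p k) w = 0"
        by (subst ww, unfold ip_lin_right) (simp add: A B)
    qed
    then show ?thesis using pW by blast
  qed
qed

lemma orth_proj_props:
  assumes "finite I" "subsp I W"
  shows "orth_proj I W y \<in> W \<and> (\<forall>w\<in>W. (\<Sum>i\<in>I. (y i - orth_proj I W y i) * w i) = 0)"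
proof -
  let ?P = "\<lambda>p. p \<in> W \<and> (\<forall>w\<in>W. (\<Sum>i\<in>I. (y i - p i) * w i) = 0)"
  have "\<exists>!p. ?P p"
  proof -
    obtain p where "p\<in>W" "\<forall>w\<in>W. ip I (\<lambda>k. y k - p k) w = 0"
      using proj_exists[OF assms] by blast
    then have P: "?P p" unfolding ip_def by simp
    have "p2 = p" if P2: "?P p2" for p2
    proof -
      define d where "d = (\<lambda>k. p2 k - 1 * p k)"
      have dW: "d \<in> W" unfolding d_def using subsp_diff[OF assms(2)] P P2 by blast
      have "ip I (\<lambda>k. y k - p k) d - ip I (\<lambda>k. y k - p2 k) d = 0"
        using P P2 dW unfolding ip_def by simp
      moreover have "ip I (\<lambda>k. y k - p k) d - ip I (\<lambda>k. y k - p2 k) d = (\<Sum>k\<in>I. d k * d k)"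
        unfolding ip_def d_def by (simp add: sum_subtractf[symmetric] algebra_simps)
      ultimately have "(\<Sum>k\<in>I. d k * d k) = 0" by simp
      then have "\<forall>k\<in>I. d k * d k = 0" using assms(1) by (subst (asm) sum_nonneg_eq_0_iff) auto
      moreover have "\<forall>k. k\<notin>I \<longrightarrow> d k = 0" using dW assms(2) unfolding subsp_def by blast
      ultimately have "\<forall>k. d k = 0" by auto
      then show ?thesis unfolding d_def by auto
    qed
    then show ?thesis using P by blast
  qed
  then have "?P (orth_proj I W y)" unfolding orth_proj_def by (rule theI')
  then show ?thesis .
qed



definition sg :: "bool \<Rightarrow> real" where "sg s = (if s then 1 else -1)"

definition Gp :: "'a set set \<Rightarrow> 'a \<Rightarrow> 'a \<Rightarrow> bool \<Rightarrow> bool" where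
"Gp F a x s \<longleftrightarrow> (\<exists>u. (\<forall>f. f\<notin>F \<longrightarrow> u f = 0) \<and>
   (\<forall>v. (\<Sum>f\<in>F. if v\<in>f then u f else 0) = (if v = a then 1 else 0) + sg s * (if v = x then 1 else 0)))"

lemma Gp_base: "Gp F a a False"
  unfolding Gp_def sg_def by (rule exI[of _ "\<lambda>_. 0"]) simp

lemma Gp_step:
  assumes "finite F" "{x,y}\<in>F" "x\<noteq>y" "Gp F a x s"
  shows "Gp F a y (\<not>s)"
proof -
  obtain u where u: "\<forall>f. f\<notin>F \<longrightarrow> u f = 0"
    "\<forall>v. (\<Sum>f\<in>F. if v\<in>f then u f else 0) = (if v = a then 1 else 0) + sg s * (if v = x then 1 else 0)"
    using assms(4) unfolding Gp_def by blast
  define u' where "u' = (\<lambda>f. u f - sg s * (if f = {x,y} then 1 else 0))"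
  have "\<forall>f. f\<notin>F \<longrightarrow> u' f = 0" using u(1) assms(2) unfolding u'_def by auto
  moreover have "(\<Sum>f\<in>F. if v\<in>f then u' f else 0) = (if v = a then 1 else 0) + sg (\<not>s) * (if v = y then 1 else 0)" for v
  proof -
    have "(\<Sum>f\<in>F. if v\<in>f then u' f else 0) = (\<Sum>f\<in>F. (if v\<in>f then u f else 0) - (if f = {x,y} then sg s * (if v \<in> {x,y} then 1 else 0) else 0))"
      unfolding u'_def by (rule sum.cong) auto
    also have "\<dots> = (\<Sum>f\<in>F. if v\<in>f then u f else 0) - sg s * (if v\<in>{x,y} then 1 else 0)"
      by (simp only: sum_subtractf sum.delta[OF assms(1)] assms(2) if_True)
    also have "\<dots> = (if v = a then 1 else 0) + sg (\<not>s) * (if v = y then 1 else 0)"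
      using u(2) assms(3) by (auto simp: sg_def)
    finally show ?thesis .
  qed
  ultimately show ?thesis unfolding Gp_def by blast
qed

lemma card2_neq: "card {x, y} = 2 \<Longrightarrow> x \<noteq> y" by auto

lemma reach1:
  assumes "(adj F)\<^sup>*\<^sup>* a y" "finite F" "\<forall>e\<in>F. card e = 2"
  shows "Gp F a y True \<or> Gp F a y False"
  using assms(1)
proof (induction rule: rtranclp_induct)
  case base
  then show ?case by (simp add: Gp_base)
next
  case (step y z)
  then have e: "{y,z} \<in> F" unfolding adj_def by simp
  have yz: "y \<noteq> z" using bspec[OF assms(3) e] by (rule card2_neq)
  have st: "Gp F a y s \<Longrightarrow> Gp F a z (\<not> s)" for s by (rule Gp_step[OF assms(2) e yz])
  show ?case using step.IH st[of True] st[of False] by auto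
qed

lemma reach2:
  assumes "(adj F)\<^sup>*\<^sup>* x y" "finite F" "\<forall>e\<in>F. card e = 2" "\<forall>s. Gp F a x s"
  shows "\<forall>s. Gp F a y s"
  using assms(1)
proof (induction rule: rtranclp_induct)
  case base
  then show ?case using assms(4) by blast
next
  case (step y z)
  then have e: "{y,z} \<in> F" unfolding adj_def by simp
  have yz: "y \<noteq> z" using bspec[OF assms(3) e] by (rule card2_neq)
  have st: "Gp F a y s \<Longrightarrow> Gp F a z (\<not> s)" for s by (rule Gp_step[OF assms(2) e yz])
  show ?case
  proof
    fix s show "Gp F a z s" using step.IH st[of "\<not> s"] by simp
  qed
qed

lemma eigen_subsp: "subsp I (eigenspace_on I M t)"
proof -
  have sc: "(\<Sum>j\<in>I. M i j * (c * x j)) = c * (\<Sum>j\<in>I. M i j * x j)" for i c x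
    by (simp add: sum_distrib_left algebra_simps)
  have ad: "(\<Sum>j\<in>I. M i j * (x j + y j)) = (\<Sum>j\<in>I. M i j * x j) + (\<Sum>j\<in>I. M i j * y j)" for i x y
    by (simp add: sum.distrib distrib_left)
  show ?thesis unfolding subsp_def eigenspace_on_def
    by (auto simp: sc ad distrib_left[of t])
qed

lemma vs_pair:
  assumes "finite I" "e \<in> I" "(\<Sum>i\<in>I. (vertex_state e i - p i) * w i) = 0"
  shows "(\<Sum>i\<in>I. p i * w i) = w e"
proof -
  have "(\<Sum>i\<in>I. (vertex_state e i - p i) * w i) = (\<Sum>i\<in>I. (if i = e then w i else 0)) - (\<Sum>i\<in>I. p i * w i)"
    unfolding vertex_state_def by (subst sum_subtractf[symmetric], rule sum.cong) (auto simp: left_diff_distrib)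
  then show ?thesis using assms by simp
qed

theorem mainTheorem14:
  fixes V :: "'a set" and E :: "'a set set" and a b \<alpha> \<beta> :: 'a
  assumes "simple_graph V E"
    and "connected_graph V E"
    and "\<not> bipartite_graph V E"
    and "card E > card V"
    and "{a, b} \<in> E" and "{\<alpha>, \<beta>} \<in> E" and "{a, b} \<noteq> {\<alpha>, \<beta>}"
    and "strongly_cospectral E (line_adj E) (vertex_state {a, b}) (vertex_state {\<alpha>, \<beta>})"
  shows "\<not> connected_graph V (E - {{a, b}, {\<alpha>, \<beta>}}) \<or> bipartite_graph V (E - {{a, b}, {\<alpha>, \<beta>}})"
proof (rule ccontr)
  assume "\<not> (\<not> connected_graph V (E - {{a, b}, {\<alpha>, \<beta>}}) \<or> bipartite_graph V (E - {{a, b}, {\<alpha>, \<beta>}}))"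
  then have conF: "connected_graph V (E - {{a, b}, {\<alpha>, \<beta>}})" and nbF: "\<not> bipartite_graph V (E - {{a, b}, {\<alpha>, \<beta>}})" by auto
  define F where "F = E - {{a, b}, {\<alpha>, \<beta>}}"
  have fV: "finite V" and Ed: "\<forall>e\<in>E. e \<subseteq> V \<and> card e = 2" using assms(1) unfolding simple_graph_def by auto
  have fE: "finite E" using Ed fV by (meson Pow_iff finite_Pow_iff finite_subset subsetI)
  have fF: "finite F" unfolding F_def using fE by simp
  have FE: "F \<subseteq> E" unfolding F_def by auto
  have cF: "\<forall>e\<in>F. card e = 2" using Ed FE by auto
  have ab: "a \<noteq> b" using conjunct2[OF bspec[OF Ed assms(5)]] by (rule card2_neq)
  have aV: "a \<in> V" and bV: "b \<in> V" using Ed assms(5) by auto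
  have conn: "\<forall>u\<in>V. \<forall>v\<in>V. (adj F)\<^sup>*\<^sup>* u v" using conF unfolding F_def connected_graph_def by blast
  have GbT: "Gp F a b True"
  proof (rule ccontr)
    assume nb: "\<not> Gp F a b True"
    have excl: "\<not> (Gp F a x True \<and> Gp F a x False)" if "x \<in> V" for x
    proof
      assume h: "Gp F a x True \<and> Gp F a x False"
      then have "\<forall>s. Gp F a x s" by (metis (full_types))
      then have "\<forall>s. Gp F a b s" using reach2[OF _ fF cF] conn that bV by blast
      then show False using nb by blast
    qed
    have all: "Gp F a x True \<or> Gp F a x False" if "x \<in> V" for x
      using reach1[OF _ fF cF] conn that aV by blast
    have "bipartite_graph V F"
      unfolding bipartite_graph_def
    proof (intro exI[of _ "\<lambda>x. Gp F a x True"] ballI impI)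
      fix u v assume uv: "u \<in> V" "v \<in> V" "{u, v} \<in> F"
      have yz: "u \<noteq> v" using bspec[OF cF uv(3)] by (rule card2_neq)
      have st: "Gp F a u s \<Longrightarrow> Gp F a v (\<not> s)" for s by (rule Gp_step[OF fF uv(3) yz])
      show "Gp F a u True \<noteq> Gp F a v True"
        using st[of True] st[of False] all[OF uv(1)] excl[OF uv(2)] by auto
    qed
    then show False using nbF unfolding F_def by simp
  qed
  obtain u where u: "\<forall>f. f\<notin>F \<longrightarrow> u f = 0"
    "\<forall>v. (\<Sum>f\<in>F. if v\<in>f then u f else 0) = (if v = a then 1 else 0) + sg True * (if v = b then 1 else 0)"
    using GbT unfolding Gp_def by blast
  define w where "w = (\<lambda>f. (if f = {a,b} then 1 else 0) - u f)"
  have e1F: "{a,b} \<notin> F" and e2F: "{\<alpha>,\<beta>} \<notin> F" unfolding F_def by auto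
  have w1: "w {a,b} = 1" unfolding w_def using u(1) e1F by simp
  have w2: "w {\<alpha>,\<beta>} = 0" unfolding w_def using u(1) e2F assms(7) by auto
  have wout: "\<forall>f. f \<notin> E \<longrightarrow> w f = 0" unfolding w_def using u(1) FE assms(5) by auto
  have S: "(\<Sum>f\<in>E. if v\<in>f then w f else 0) = 0" for v
  proof -
    have "(\<Sum>f\<in>E. if v\<in>f then w f else 0) = (\<Sum>f\<in>E. (if f = {a,b} then (if v \<in> {a,b} then 1 else 0) else 0) - (if v\<in>f then u f else 0))"
      unfolding w_def by (rule sum.cong) auto
    also have "\<dots> = (if v \<in> {a,b} then 1 else 0) - (\<Sum>f\<in>E. if v\<in>f then u f else 0)"
      by (simp only: sum_subtractf sum.delta[OF fE] assms(5) if_True)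
    also have "(\<Sum>f\<in>E. if v\<in>f then u f else 0) = (\<Sum>f\<in>F. if v\<in>f then u f else 0)"
      by (rule sum.mono_neutral_right[OF fE FE]) (use u(1) in auto)
    finally show ?thesis using u(2) ab by (auto simp: sg_def)
  qed
  define M where "M = line_adj E"
  define W where "W = eigenspace_on E M (-2)"
  have wW: "w \<in> W" unfolding W_def eigenspace_on_def
  proof (intro CollectI conjI allI impI ballI)
    fix i assume "i \<notin> E" then show "w i = 0" using wout by blast
  next
    fix e assume eE: "e \<in> E"
    then obtain p q where pq: "e = {p,q}" "p \<noteq> q" using Ed card_2_iff by metis
    have pt: "M e f * w f = (if p\<in>f then w f else 0) + (if q\<in>f then w f else 0) - 2 * (if f = e then w f else 0)"
      if fE': "f \<in> E" for f
    proof (cases "f = e")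
      case True then show ?thesis unfolding M_def line_adj_def using pq by simp
    next
      case False
      have "\<not> (p \<in> f \<and> q \<in> f)"
      proof
        assume "p \<in> f \<and> q \<in> f"
        then have "{p,q} \<subseteq> f" by auto
        moreover have "card f = 2" "card {p,q} = 2" using Ed fE' eE pq by auto
        moreover have "finite f" using \<open>card f = 2\<close> card.infinite by fastforce
        ultimately have "f = {p,q}" using card_subset_eq by metis
        then show False using False pq by simp
      qed
      moreover have "(e \<inter> f \<noteq> {}) = (p \<in> f \<or> q \<in> f)" using pq by auto
      ultimately show ?thesis unfolding M_def line_adj_def using False fE' eE by auto
    qed
    have "(\<Sum>f\<in>E. M e f * w f) = (\<Sum>f\<in>E. (if p\<in>f then w f else 0) + (if q\<in>f then w f else 0) - 2 * (if f = e then w f else 0))"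
      using pt by (rule sum.cong[OF refl])
    also have "\<dots> = (\<Sum>f\<in>E. if p\<in>f then w f else 0) + (\<Sum>f\<in>E. if q\<in>f then w f else 0) - 2 * (\<Sum>f\<in>E. if f = e then w f else 0)"
      by (simp only: sum_subtractf sum.distrib sum_distrib_left)
    also have "\<dots> = - 2 * w e" using S sum.delta[OF fE, of e w] eE by simp
    finally show "(\<Sum>f\<in>E. M e f * w f) = - 2 * w e" .
  qed
  have ev: "is_eigenvalue_on E M (-2)" unfolding is_eigenvalue_on_def W_def[symmetric]
    using wW w1 by (metis zero_neq_one)
  have sW: "subsp E W" unfolding W_def by (rule eigen_subsp)
  define P where "P = spectral_proj E M (-2)"
  have PP: "P = orth_proj E W" unfolding P_def W_def spectral_proj_def by simp
  have o1: "(\<Sum>i\<in>E. (vertex_state {a,b} i - P (vertex_state {a,b}) i) * w i) = 0"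
    using orth_proj_props[OF fE sW] wW unfolding PP by blast
  have o2: "(\<Sum>i\<in>E. (vertex_state {\<alpha>,\<beta>} i - P (vertex_state {\<alpha>,\<beta>}) i) * w i) = 0"
    using orth_proj_props[OF fE sW] wW unfolding PP by blast
  have r1: "(\<Sum>i\<in>E. P (vertex_state {a,b}) i * w i) = 1" using vs_pair[OF fE assms(5) o1] w1 by simp
  have r2: "(\<Sum>i\<in>E. P (vertex_state {\<alpha>,\<beta>}) i * w i) = 0" using vs_pair[OF fE assms(6) o2] w2 by simp
  have "P (vertex_state {a,b}) = P (vertex_state {\<alpha>,\<beta>}) \<or> P (vertex_state {a,b}) = (\<lambda>i. - P (vertex_state {\<alpha>,\<beta>}) i)"
    using assms(8) ev unfolding strongly_cospectral_def P_def M_def by blast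
  then show False
  proof
    assume "P (vertex_state {a,b}) = P (vertex_state {\<alpha>,\<beta>})"
    then show False using r1 r2 by simp
  next
    assume h: "P (vertex_state {a,b}) = (\<lambda>i. - P (vertex_state {\<alpha>,\<beta>}) i)"
    have "(\<Sum>i\<in>E. P (vertex_state {a,b}) i * w i) = - (\<Sum>i\<in>E. P (vertex_state {\<alpha>,\<beta>}) i * w i)"
      unfolding h by (simp add: sum_negf[symmetric])
    then show False using r1 r2 by simp
  qed
qed

end
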